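(* Let $\Delta\geq 3$ be an integer and let $G$ be a triangle-free $\Delta$-regular graph. Then $$\alpha(G)\geq \frac{1}{2}\left(1+\frac{(\Delta-1)(\Delta+1)}{2^{\Delta}\Delta^2+(\Delta-1)(\Delta+1)}\right)\mathrm{diss}(G).$$
   Context: All graphs are finite, simple and undirected. $\alpha(G)$ is the independence number. A set $D$ of vertices is a dissociation set if the induced subgraph $G[D]$ has maximum degree at most $1$; $\mathrm{diss}(G)$ is the maximum order of a dissociation set. *)

theory Defs
  imports Complex_Main
begin

definition simple_graph :: "'a set \<Rightarrow> ('a \<Rightarrow> 'a \<Rightarrow> bool) \<Rightarrow> bool" where
  "simple_graph V E \<longleftrightarrow> finite V \<and> (\<forall>x y. E x y \<longrightarrow> x \<in> V \<and> y \<in> V)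
     \<and> (\<forall>x y. E x y \<longrightarrow> E y x) \<and> (\<forall>x. \<not> E x x)"

definition neighbours :: "'a set \<Rightarrow> ('a \<Rightarrow> 'a \<Rightarrow> bool) \<Rightarrow> 'a \<Rightarrow> 'a set" where
  "neighbours V E v = {u \<in> V. E v u}"

definition regular :: "'a set \<Rightarrow> ('a \<Rightarrow> 'a \<Rightarrow> bool) \<Rightarrow> nat \<Rightarrow> bool" where
  "regular V E d \<longleftrightarrow> (\<forall>v \<in> V. card (neighbours V E v) = d)"

definition triangle_free :: "'a set \<Rightarrow> ('a \<Rightarrow> 'a \<Rightarrow> bool) \<Rightarrow> bool" where
  "triangle_free V E \<longleftrightarrow> \<not> (\<exists>x\<in>V. \<exists>y\<in>V. \<exists>z\<in>V. E x y \<and> E y z \<and> E x z)"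

definition independent_set :: "'a set \<Rightarrow> ('a \<Rightarrow> 'a \<Rightarrow> bool) \<Rightarrow> 'a set \<Rightarrow> bool" where
  "independent_set V E S \<longleftrightarrow> S \<subseteq> V \<and> (\<forall>x\<in>S. \<forall>y\<in>S. \<not> E x y)"

definition dissociation_set :: "'a set \<Rightarrow> ('a \<Rightarrow> 'a \<Rightarrow> bool) \<Rightarrow> 'a set \<Rightarrow> bool" where
  "dissociation_set V E D \<longleftrightarrow> D \<subseteq> V \<and> (\<forall>v\<in>D. card (neighbours D E v) \<le> 1)"

definition alpha :: "'a set \<Rightarrow> ('a \<Rightarrow> 'a \<Rightarrow> bool) \<Rightarrow> nat" where
  "alpha V E = Max (card ` {S. independent_set V E S})"

definition diss :: "'a set \<Rightarrow> ('a \<Rightarrow> 'a \<Rightarrow> bool) \<Rightarrow> nat" where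
  "diss V E = Max (card ` {D. dissociation_set V E D})"

end

theory Submission
  imports Defs
begin

lemma caro_wei:
  fixes F :: "'a set" and b :: "'a \<Rightarrow> nat" and E :: "'a \<Rightarrow> 'a \<Rightarrow> bool"
  assumes "finite F" "\<forall>w\<in>F. card {u\<in>F. E w u} \<le> b w"
    and sym: "\<forall>x y. E x y \<longrightarrow> E y x" and irr: "\<forall>x. \<not> E x x"
  shows "\<exists>S\<subseteq>F. (\<forall>x\<in>S. \<forall>y\<in>S. \<not> E x y) \<and> (\<Sum>w\<in>F. 1 / (real (b w) + 1)) \<le> real (card S)"
  using assms(1,2)
proof (induction "card F" arbitrary: F rule: less_induct)
  case less
  show ?case
  proof (cases "F = {}")
    case True then show ?thesis by auto
  next
    case False
    have fin: "finite F" by fact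
    obtain v where v: "v \<in> F" "b v = Min (b ` F)"
    proof -
      have "Min (b ` F) \<in> b ` F" using Min_in[of "b ` F"] fin False by auto
      then show ?thesis using that by auto
    qed
    have vmin: "\<forall>u\<in>F. b v \<le> b u" using v fin by auto
    define N where "N = {u\<in>F. E v u}"
    define F' where "F' = F - insert v N"
    have NF: "insert v N \<subseteq> F" using v N_def by auto
    have "F' \<subset> F" unfolding F'_def using v by auto
    then have "card F' < card F" using fin by (simp add: psubset_card_mono)
    moreover have "\<forall>w\<in>F'. card {u\<in>F'. E w u} \<le> b w"
    proof
      fix w assume w: "w \<in> F'"
      have "card {u\<in>F'. E w u} \<le> card {u\<in>F. E w u}"
        by (rule card_mono) (use fin F'_def in auto)
      also have "\<dots> \<le> b w" using less.prems(2) w F'_def by auto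
      finally show "card {u\<in>F'. E w u} \<le> b w" .
    qed
    moreover have "finite F'" using fin F'_def by auto
    ultimately have "\<exists>S\<subseteq>F'. (\<forall>x\<in>S. \<forall>y\<in>S. \<not> E x y) \<and> (\<Sum>w\<in>F'. 1 / (real (b w) + 1)) \<le> real (card S)"
      using less.hyps by simp
    then obtain S' where S': "S' \<subseteq> F'" "\<forall>x\<in>S'. \<forall>y\<in>S'. \<not> E x y"
      "(\<Sum>w\<in>F'. 1 / (real (b w) + 1)) \<le> real (card S')"
      by blast
    define S where "S = insert v S'"
    have "S \<subseteq> F" using S' v F'_def S_def by auto
    moreover have "\<forall>x\<in>S. \<forall>y\<in>S. \<not> E x y"
    proof (intro ballI)
      fix x y assume "x \<in> S" "y \<in> S"
      have nv: "\<And>z. z \<in> S' \<Longrightarrow> \<not> E v z" using S'(1) unfolding F'_def N_def by auto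
      show "\<not> E x y"
      proof (cases "x = v")
        case True then show ?thesis using \<open>y \<in> S\<close> nv irr S_def by auto
      next
        case False
        then have "x \<in> S'" using \<open>x \<in> S\<close> S_def by auto
        then show ?thesis using \<open>y \<in> S\<close> nv sym S'(2) S_def by auto
      qed
    qed
    moreover have "(\<Sum>w\<in>F. 1 / (real (b w) + 1)) \<le> real (card S)"
    proof -
      have finS': "finite S'" using S'(1) \<open>finite F'\<close> finite_subset by blast
      have vS': "v \<notin> S'" using S' F'_def by auto
      have cS: "card S = card S' + 1" using S_def finS' vS' by auto
      have finN: "finite (insert v N)" using finite_subset[OF NF fin] .
      have split: "F = F' \<union> insert v N" using NF unfolding F'_def by blast
      have dj: "F' \<inter> insert v N = {}" unfolding F'_def by blast
      have "(\<Sum>w\<in>F. 1 / (real (b w) + 1)) = (\<Sum>w\<in>F'. 1 / (real (b w) + 1)) + (\<Sum>w\<in>insert v N. 1 / (real (b w) + 1))"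
        using sum.union_disjoint[OF \<open>finite F'\<close> finN dj] split by simp
      moreover have "(\<Sum>w\<in>insert v N. 1 / (real (b w) + 1)) \<le> 1"
      proof -
        have "(\<Sum>w\<in>insert v N. 1 / (real (b w) + 1)) \<le> (\<Sum>w\<in>insert v N. 1 / (real (b v) + 1))"
        proof (rule sum_mono)
          fix w assume "w \<in> insert v N"
          then have "b v \<le> b w" using vmin NF by auto
          then show "1 / (real (b w) + 1) \<le> 1 / (real (b v) + 1)"
            by (intro divide_left_mono) auto
        qed
        also have "\<dots> = real (card (insert v N)) / (real (b v) + 1)" by simp
        also have "\<dots> \<le> 1"
        proof -
          have "card (insert v N) = card N + 1" using irr N_def finN by auto
          moreover have "card N \<le> b v" using less.prems(2) v N_def by auto
          ultimately show ?thesis by simp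
        qed
        finally show ?thesis .
      qed
      ultimately show ?thesis using S'(3) cS by simp
    qed
    ultimately show ?thesis by blast
  qed
qed

lemma count_sets:
  assumes "finite U" "A \<subseteq> U" "B \<subseteq> U" "A \<inter> B = {}"
  shows "card {Y. Y \<subseteq> U \<and> Y \<inter> A = {} \<and> B \<subseteq> Y} = 2 ^ (card U - card A - card B)"
proof -
  have eq: "{Y. Y \<subseteq> U \<and> Y \<inter> A = {} \<and> B \<subseteq> Y} = (\<lambda>Z. Z \<union> B) ` Pow (U - A - B)"
  proof (intro equalityI subsetI)
    fix Y assume "Y \<in> {Y. Y \<subseteq> U \<and> Y \<inter> A = {} \<and> B \<subseteq> Y}"
    then have "Y = (Y - B) \<union> B" "Y - B \<in> Pow (U - A - B)" by auto
    then show "Y \<in> (\<lambda>Z. Z \<union> B) ` Pow (U - A - B)" by blast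
  next
    fix Y assume "Y \<in> (\<lambda>Z. Z \<union> B) ` Pow (U - A - B)"
    then show "Y \<in> {Y. Y \<subseteq> U \<and> Y \<inter> A = {} \<and> B \<subseteq> Y}" using assms by auto
  qed
  have inj: "inj_on (\<lambda>Z. Z \<union> B) (Pow (U - A - B))"
    by (rule inj_onI) auto
  have "card {Y. Y \<subseteq> U \<and> Y \<inter> A = {} \<and> B \<subseteq> Y} = card (Pow (U - A - B))"
    using eq card_image[OF inj] by simp
  also have "\<dots> = 2 ^ card (U - A - B)"
    using assms by (simp add: card_Pow)
  also have "card (U - A - B) = card U - card A - card B"
  proof -
    have "card (U - A - B) = card (U - A) - card B"
      using assms by (subst card_Diff_subset) (auto intro: finite_subset)
    moreover have "card (U - A) = card U - card A"
      using assms by (subst card_Diff_subset) (auto intro: finite_subset)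
    ultimately show ?thesis by simp
  qed
  finally show ?thesis .
qed

lemma double_count:
  assumes "finite A" "finite B"
  shows "(\<Sum>w\<in>A. card {z\<in>B. R w z}) = (\<Sum>z\<in>B. card {w\<in>A. R w z})"
proof -
  have c: "\<And>S P. finite S \<Longrightarrow> card {z\<in>S. P z} = (\<Sum>z\<in>S. if P z then 1 else 0)"
    by (simp add: sum.inter_filter[symmetric])
  have "(\<Sum>w\<in>A. card {z\<in>B. R w z}) = (\<Sum>w\<in>A. \<Sum>z\<in>B. if R w z then 1 else 0)"
    by (intro sum.cong refl c assms)
  also have "\<dots> = (\<Sum>z\<in>B. \<Sum>w\<in>A. if R w z then 1 else 0)" by (rule sum.swap)
  also have "\<dots> = (\<Sum>z\<in>B. card {w\<in>A. R w z})"
    by (intro sum.cong refl c[symmetric] assms)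
  finally show ?thesis .
qed

lemma pow_ineq:
  fixes d D :: nat assumes "d \<le> D"
  shows "d * (D - d + 1) * 2 ^ d \<le> 2 ^ D * D"
proof -
  define j where "j = D - d"
  have D: "D = d + j" using assms j_def by simp
  have "j + 1 \<le> 2 ^ j" by (induction j) auto
  then have "d * (j + 1) \<le> D * 2 ^ j" using D by (intro mult_mono) auto
  then have "d * (j + 1) * 2 ^ d \<le> D * 2 ^ j * 2 ^ d" by simp
  also have "\<dots> = 2 ^ D * D" using D by (simp add: power_add)
  finally show ?thesis using j_def by simp
qed

lemma arith_cx:
  fixes K q P d s :: real
  assumes "K > 0" "P > 0" "2*(d-1)*K \<le> P*(P*s)" "K = P*s+q"
  shows "(K+q)/(2*K) \<le> 1 - (d-1)/P"
proof -
  have "(K+q)/(2*K) = 1 - P*s/(2*K)" using assms by (simp add: field_simps)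
  moreover have "(d-1)/P \<le> P*s/(2*K)" using assms by (simp add: field_simps mult.commute)
  ultimately show ?thesis by simp
qed

lemma arith_cm:
  fixes K q P d s :: real
  assumes "K > 0" "P > 0" "d > 1" "(d+1)*P*d \<le> 2*K" "q = (d-1)*(d+1)"
  shows "q / K \<le> 2*(d-1)/(P*d)"
proof -
  have "q*(P*d) \<le> 2*(d-1)*K" proof -
    have "q*(P*d) = (d-1)*((d+1)*P*d)" unfolding assms(5) by (simp add: algebra_simps)
    also have "\<dots> \<le> (d-1)*(2*K)" using assms by (intro mult_left_mono) auto
    also have "\<dots> = 2*(d-1)*K" by simp
    finally show ?thesis .
  qed
  have Pd: "P*d > 0" using assms by simp
  then have "q \<le> (2*(d-1)*K)/(P*d)" using \<open>q*(P*d) \<le> 2*(d-1)*K\<close> by (simp add: le_divide_eq)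
  then have "q / K \<le> ((2*(d-1)*K)/(P*d)) / K" using assms by (intro divide_right_mono) auto
  also have "\<dots> = 2*(d-1)/(P*d)" using assms by simp
  finally show ?thesis .
qed

lemma final_arith:
  fixes x m d a P :: real
  assumes "d \<ge> 3" "x \<ge> 0" "m \<ge> 0" "P \<ge> 4 * (d - 1)"
    and "a \<ge> x + m + (2 * m * (d - 1) - x * d * (d - 1)) / (P * d)"
  shows "a \<ge> 1/2 * (1 + (d - 1) * (d + 1) / (P * d^2 + (d - 1) * (d + 1))) * (x + 2 * m)"
proof -
  define s where "s = d^2"
  define q where "q = (d - 1) * (d + 1)"
  define K where "K = P * s + q"
  define t where "t = 1/2 * (1 + q / K)"
  have Ppos: "P > 0" using assms by simp
  have spos: "s \<ge> 9"
  proof -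
    have "3*3 \<le> d*d" using assms by (intro mult_mono) auto
    then show ?thesis unfolding s_def by (simp add: power2_eq_square)
  qed
  have ds: "d \<le> s" unfolding s_def using assms by (simp add: power2_eq_square)
  have qs: "q = s - 1" unfolding q_def s_def by (simp add: algebra_simps power2_eq_square)
  have Ps: "s \<le> P * s"
  proof -
    have "1*s \<le> P*s" using assms spos by (intro mult_right_mono) auto
    then show ?thesis by simp
  qed
  have Kpos: "K > 0" unfolding K_def using qs spos Ps by linarith
  have eq: "x + m + (2 * m * (d - 1) - x * d * (d - 1)) / (P * d)
      = x * (1 - (d - 1) / P) + m * (1 + 2 * (d - 1) / (P * d))"
    using assms by (simp add: field_simps)
  have cx: "1 - (d - 1) / P \<ge> t"
  proof -
    have "t = (K + q) / (2 * K)" unfolding t_def using Kpos by (simp add: field_simps)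
    moreover have "2*(d-1)*K \<le> P*(P*s)"
    proof -
      have "K \<le> 2 * (P * s)" unfolding K_def using qs Ps by simp
      then have "2*(d-1)*K \<le> 2*(d-1)*(2*(P*s))" using assms by (intro mult_left_mono) auto
      also have "\<dots> = (4*(d-1))*(P*s)" by simp
      also have "\<dots> \<le> P*(P*s)" using assms Ppos spos by (intro mult_right_mono) auto
      finally show ?thesis .
    qed
    ultimately show ?thesis using arith_cx[OF Kpos Ppos _ K_def] by simp
  qed
  have cm: "1 + 2 * (d - 1) / (P * d) \<ge> 2 * t"
  proof -
    have "(d+1)*P*d \<le> 2*K"
    proof -
      have "(d+1)*P*d = P*(d*d) + P*d" by (simp add: algebra_simps)
      also have "\<dots> \<le> P*s + P*s" using ds Ppos unfolding s_def
        by (intro add_mono mult_left_mono) (auto simp: power2_eq_square)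
      finally show ?thesis unfolding K_def using qs spos by simp
    qed
    then have "q / K \<le> 2*(d-1)/(P*d)" using arith_cm[OF Kpos Ppos _ _ q_def] assms by simp
    moreover have "2*t = 1 + q/K" unfolding t_def by simp
    ultimately show ?thesis by linarith
  qed
  have "a \<ge> x * (1 - (d - 1) / P) + m * (1 + 2 * (d - 1) / (P * d))" using assms(5) eq by simp
  moreover have "x * (1 - (d - 1) / P) + m * (1 + 2 * (d - 1) / (P * d)) \<ge> x * t + m * (2 * t)"
    using cx cm assms by (intro add_mono mult_left_mono) auto
  ultimately have "a \<ge> t * (x + 2 * m)" by (simp add: algebra_simps)
  then show ?thesis unfolding t_def K_def q_def s_def by simp
qed


lemma pow_ge: "n \<ge> 3 \<Longrightarrow> 4 * (n - 1) \<le> (2::nat) ^ n"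
proof (induction n rule: nat_induct_at_least)
  case base then show ?case by simp
next
  case (Suc n) then show ?case by simp
qed

context
  fixes V :: "'a set" and E :: "'a \<Rightarrow> 'a \<Rightarrow> bool" and \<Delta> :: nat
    and D I M :: "'a set" and p :: "'a \<Rightarrow> 'a" and U :: "'a set"
  assumes sg: "simple_graph V E" and tf: "triangle_free V E" and reg: "regular V E \<Delta>"
    and ds: "dissociation_set V E D"
    and I_def: "I = {v\<in>D. \<forall>u\<in>D. \<not> E v u}" and M_def: "M = D - I"
    and p_in: "\<And>v. v \<in> M \<Longrightarrow> p v \<in> D \<and> E v (p v)"
    and p_uniq: "\<And>v u. v \<in> M \<Longrightarrow> u \<in> D \<Longrightarrow> E v u \<Longrightarrow> u = p v"
    and U_sub: "U \<subseteq> M" and U_disj: "U \<inter> p ` U = {}" and U_cov: "M = U \<union> p ` U"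
begin

lemma finV: "finite V" using sg unfolding simple_graph_def by auto
lemma Ein: "E x y \<Longrightarrow> x \<in> V \<and> y \<in> V" using sg unfolding simple_graph_def by auto
lemma Esym: "E x y \<Longrightarrow> E y x" using sg unfolding simple_graph_def by auto
lemma Eirr: "\<not> E x x" using sg unfolding simple_graph_def by auto
lemma DV: "D \<subseteq> V" using ds unfolding dissociation_set_def by auto
lemma finD: "finite D" using finite_subset[OF DV finV] .
lemma MD: "M \<subseteq> D" using M_def by auto
lemma ID: "I \<subseteq> D" using I_def by auto
lemma IM: "I \<inter> M = {}" using M_def by auto
lemma finM: "finite M" using finite_subset[OF MD finD] .
lemma finI: "finite I" using finite_subset[OF ID finD] .
lemma finU: "finite U" using finite_subset[OF U_sub finM] .

lemma pM: "v \<in> M \<Longrightarrow> p v \<in> M"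
proof -
  assume v: "v \<in> M"
  have pv: "p v \<in> D" "E v (p v)" using p_in[OF v] by auto
  moreover have "v \<in> D" using v MD by auto
  ultimately have "p v \<notin> I" using I_def Esym by auto
  then show ?thesis using pv M_def by auto
qed

lemma pp: "v \<in> M \<Longrightarrow> p (p v) = v"
proof -
  assume v: "v \<in> M"
  have "E (p v) v" using p_in[OF v] Esym by auto
  moreover have "v \<in> D" using v MD by auto
  ultimately show "p (p v) = v" using p_uniq[OF pM[OF v]] by auto
qed

lemma injp: "inj_on p M" by (metis inj_onI pp)

lemma cardM: "card M = 2 * card U"
proof -
  have "card M = card U + card (p ` U)"
    using U_cov U_disj finU card_Un_disjoint by (metis finite_imageI)
  moreover have "card (p ` U) = card U"
    using card_image[OF inj_on_subset[OF injp U_sub]] .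
  ultimately show ?thesis by simp
qed

lemma cardD: "card D = card I + 2 * card U"
proof -
  have "D = I \<union> M" using M_def ID by auto
  then have "card D = card I + card M" using card_Un_disjoint[OF finI finM IM] by simp
  then show ?thesis using cardM by simp
qed

lemma nbr_card: "v \<in> V \<Longrightarrow> card {u\<in>V. E v u} = \<Delta>"
  using reg unfolding regular_def neighbours_def by auto

definition Ch where "Ch Y = Y \<union> p ` (U - Y)"
definition X0 where "X0 = {w \<in> V - D. \<forall>z. E w z \<longrightarrow> z \<notin> I}"
definition Fr where "Fr Y = {w \<in> X0. \<forall>z. E w z \<longrightarrow> z \<notin> Ch Y}"
definition dg where "dg w = card {z\<in>M. E w z}"

lemma Ch_sub: "Y \<subseteq> U \<Longrightarrow> Ch Y \<subseteq> M"
  unfolding Ch_def using U_sub pM by auto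

lemma card_Ch: "Y \<subseteq> U \<Longrightarrow> card (Ch Y) = card U"
proof -
  assume Y: "Y \<subseteq> U"
  have fY: "finite Y" using finite_subset[OF Y finU] .
  have dj: "Y \<inter> p ` (U - Y) = {}" using Y U_disj by auto
  have "card (Ch Y) = card Y + card (p ` (U - Y))"
    unfolding Ch_def using card_Un_disjoint[OF fY _ dj] finU by auto
  moreover have "card (p ` (U - Y)) = card (U - Y)"
    by (rule card_image, rule inj_on_subset[OF injp]) (use U_sub in auto)
  moreover have "card (U - Y) = card U - card Y" using card_Diff_subset[OF fY Y] .
  moreover have "card Y \<le> card U" using card_mono[OF finU Y] .
  ultimately show ?thesis by simp
qed

lemma indep_ICh:
  assumes Y: "Y \<subseteq> U" and x: "x \<in> I \<union> Ch Y" and y: "y \<in> I \<union> Ch Y"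
  shows "\<not> E x y"
proof
  assume e: "E x y"
  have xD: "x \<in> D" and yD: "y \<in> D" using x y Ch_sub[OF Y] MD ID by auto
  show False
  proof (cases "x \<in> I \<or> y \<in> I")
    case True then show ?thesis using I_def e Esym xD yD by auto
  next
    case False
    then have xC: "x \<in> Ch Y" and yC: "y \<in> Ch Y" using x y by auto
    have xM: "x \<in> M" using Ch_sub[OF Y] xC by auto
    have ypx: "y = p x" using p_uniq[OF xM yD e] .
    from xC consider (a) "x \<in> Y" | (b) u where "u \<in> U - Y" "x = p u" unfolding Ch_def by auto
    then show False
    proof cases
      case a
      from yC consider (c) "y \<in> Y" | (d) u' where "u' \<in> U - Y" "y = p u'" unfolding Ch_def by auto
      then show False
      proof cases
        case c then show False using ypx a Y U_disj by auto
      next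
        case d
        then have "p (p x) = p (p u')" using ypx by simp
        then have "x = u'" using pp xM d U_sub by auto
        then show False using a d by auto
      qed
    next
      case b
      have uM: "u \<in> M" using b U_sub by auto
      have yu: "y = u" using ypx b pp[OF uM] by simp
      from yC consider (c) "y \<in> Y" | (d) u' where "u' \<in> U - Y" "y = p u'" unfolding Ch_def by auto
      then show False
      proof cases
        case c then show False using yu b by auto
      next
        case d then show False using yu b U_disj by auto
      qed
    qed
  qed
qed

lemma X0_sub: "X0 \<subseteq> V - D" unfolding X0_def by auto
lemma finX0: "finite X0" using finite_subset[OF X0_sub] finV by auto
lemma Fr_sub: "Fr Y \<subseteq> X0" unfolding Fr_def by auto

lemma dg_le: "w \<in> V \<Longrightarrow> dg w \<le> \<Delta>"
proof -
  assume w: "w \<in> V"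
  have "{z\<in>M. E w z} \<subseteq> {u\<in>V. E w u}" using MD DV by auto
  then have "dg w \<le> card {u\<in>V. E w u}" unfolding dg_def by (intro card_mono) (use finV in auto)
  then show ?thesis using nbr_card[OF w] by simp
qed

lemma deg_Fr:
  assumes w: "w \<in> Fr Y" shows "card {u\<in>Fr Y. E w u} \<le> \<Delta> - dg w"
proof -
  have wV: "w \<in> V" using w Fr_sub X0_sub by auto
  have sub1: "{z\<in>M. E w z} \<subseteq> {u\<in>V. E w u}" using MD DV by auto
  have "{u\<in>Fr Y. E w u} \<subseteq> {u\<in>V. E w u} - {z\<in>M. E w z}"
    using Fr_sub X0_sub MD by auto
  then have "card {u\<in>Fr Y. E w u} \<le> card ({u\<in>V. E w u} - {z\<in>M. E w z})"
    by (intro card_mono) (use finV in auto)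
  also have "\<dots> = \<Delta> - dg w" unfolding dg_def
    using card_Diff_subset[OF _ sub1] finite_subset[OF sub1] finV nbr_card[OF wV] by auto
  finally show ?thesis .
qed

lemma alpha_step:
  assumes aS: "\<And>S. S \<subseteq> V \<Longrightarrow> (\<forall>x\<in>S. \<forall>y\<in>S. \<not> E x y) \<Longrightarrow> real (card S) \<le> a"
    and Y: "Y \<subseteq> U"
  shows "real (card I) + real (card U) + (\<Sum>w\<in>Fr Y. 1 / (real (\<Delta> - dg w) + 1)) \<le> a"
proof -
  have finFr: "finite (Fr Y)" using finite_subset[OF Fr_sub finX0] .
  obtain S' where S': "S' \<subseteq> Fr Y" "\<forall>x\<in>S'. \<forall>y\<in>S'. \<not> E x y"
      "(\<Sum>w\<in>Fr Y. 1 / (real (\<Delta> - dg w) + 1)) \<le> real (card S')"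
    using caro_wei[of "Fr Y" E "\<lambda>w. \<Delta> - dg w"] finFr deg_Fr Esym Eirr by blast
  define S where "S = (I \<union> Ch Y) \<union> S'"
  have S'V: "S' \<subseteq> V - D" using S'(1) Fr_sub X0_sub by auto
  have ICV: "I \<union> Ch Y \<subseteq> D" using Ch_sub[OF Y] MD ID by auto
  have "S \<subseteq> V" unfolding S_def using S'V ICV DV by auto
  moreover have "\<forall>x\<in>S. \<forall>y\<in>S. \<not> E x y"
  proof (intro ballI)
    fix x y assume x: "x \<in> S" and y: "y \<in> S"
    have fr: "\<And>w z. w \<in> S' \<Longrightarrow> z \<in> I \<union> Ch Y \<Longrightarrow> \<not> E w z"
      using S'(1) unfolding Fr_def X0_def by auto
    show "\<not> E x y"
    proof (cases "x \<in> S'")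
      case True
      then show ?thesis using y S'(2) fr unfolding S_def by auto
    next
      case False
      then have "x \<in> I \<union> Ch Y" using x S_def by auto
      then show ?thesis using y fr Esym indep_ICh[OF Y] unfolding S_def by blast
    qed
  qed
  ultimately have "real (card S) \<le> a" using aS by blast
  moreover have "card S = card I + card U + card S'"
  proof -
    have finS': "finite S'" using finite_subset[OF S'(1) finFr] .
    have finC: "finite (Ch Y)" using finite_subset[OF Ch_sub[OF Y] finM] .
    have "card (I \<union> Ch Y) = card I + card (Ch Y)"
      using card_Un_disjoint[OF finI finC] IM Ch_sub[OF Y] by auto
    moreover have "card S = card (I \<union> Ch Y) + card S'"
      unfolding S_def using card_Un_disjoint[of "I \<union> Ch Y" S'] finI finC finS' S'V ICV by auto
    ultimately show ?thesis using card_Ch[OF Y] by simp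
  qed
  ultimately show ?thesis using S'(3) by simp
qed


lemma count_free:
  assumes w: "w \<in> X0"
  shows "card {Y\<in>Pow U. w \<in> Fr Y} = 2 ^ (card U - dg w)" and "dg w \<le> card U"
proof -
  define A where "A = {u\<in>U. E w u}"
  define B where "B = {u\<in>U. E w (p u)}"
  have wV: "w \<in> V" using w X0_sub by auto
  have AU: "A \<subseteq> U" and BU: "B \<subseteq> U" unfolding A_def B_def by auto
  have AB: "A \<inter> B = {}"
  proof (rule ccontr)
    assume "A \<inter> B \<noteq> {}"
    then obtain u where u: "u \<in> U" "E w u" "E w (p u)" unfolding A_def B_def by auto
    have uM: "u \<in> M" using u U_sub by auto
    have "E u (p u)" using p_in[OF uM] by auto
    moreover have "u \<in> V" "p u \<in> V" using Ein u by auto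
    ultimately show False using tf wV u unfolding triangle_free_def by blast
  qed
  have eqs: "{Y\<in>Pow U. w \<in> Fr Y} = {Y. Y \<subseteq> U \<and> Y \<inter> A = {} \<and> B \<subseteq> Y}"
  proof (intro equalityI subsetI)
    fix Y assume "Y \<in> {Y\<in>Pow U. w \<in> Fr Y}"
    then have Y: "Y \<subseteq> U" and nz: "\<And>z. E w z \<Longrightarrow> z \<notin> Ch Y" unfolding Fr_def by auto
    have "Y \<inter> A = {}" using nz unfolding A_def Ch_def by auto
    moreover have "B \<subseteq> Y"
    proof
      fix u assume "u \<in> B"
      then have "u \<in> U" "E w (p u)" unfolding B_def by auto
      then show "u \<in> Y" using nz unfolding Ch_def by auto
    qed
    ultimately show "Y \<in> {Y. Y \<subseteq> U \<and> Y \<inter> A = {} \<and> B \<subseteq> Y}" using Y by auto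
  next
    fix Y assume "Y \<in> {Y. Y \<subseteq> U \<and> Y \<inter> A = {} \<and> B \<subseteq> Y}"
    then have Y: "Y \<subseteq> U" "Y \<inter> A = {}" "B \<subseteq> Y" by auto
    have "\<forall>z. E w z \<longrightarrow> z \<notin> Ch Y"
    proof (intro allI impI)
      fix z assume e: "E w z"
      show "z \<notin> Ch Y"
      proof
        assume "z \<in> Ch Y"
        then consider "z \<in> Y" | u where "u \<in> U - Y" "z = p u" unfolding Ch_def by auto
        then show False
        proof cases
          case 1 then show False using Y e unfolding A_def by auto
        next
          case 2 then show False using Y e unfolding B_def by auto
        qed
      qed
    qed
    then show "Y \<in> {Y\<in>Pow U. w \<in> Fr Y}" using Y w unfolding Fr_def by auto
  qed
  have dgAB: "dg w = card A + card B"
  proof -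
    have "{z\<in>M. E w z} = A \<union> p ` B"
    proof (intro equalityI subsetI)
      fix z assume "z \<in> {z\<in>M. E w z}"
      then have z: "z \<in> M" "E w z" by auto
      then consider "z \<in> U" | u where "u \<in> U" "z = p u" using U_cov by auto
      then show "z \<in> A \<union> p ` B"
      proof cases
        case 1 then show ?thesis using z unfolding A_def by auto
      next
        case 2 then show ?thesis using z unfolding B_def by auto
      qed
    next
      fix z assume "z \<in> A \<union> p ` B"
      then show "z \<in> {z\<in>M. E w z}" using U_sub pM unfolding A_def B_def by auto
    qed
    moreover have "A \<inter> p ` B = {}" using AU BU U_disj by auto
    moreover have "card (p ` B) = card B"
      by (rule card_image, rule inj_on_subset[OF injp]) (use BU U_sub in auto)
    moreover have "finite A" "finite (p ` B)" using finite_subset[OF AU finU] finite_subset[OF BU finU] by auto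
    ultimately show ?thesis unfolding dg_def by (simp add: card_Un_disjoint)
  qed
  show "card {Y\<in>Pow U. w \<in> Fr Y} = 2 ^ (card U - dg w)"
    using eqs count_sets[OF finU AU BU AB] dgAB by simp
  have "card A + card B = card (A \<union> B)"
    using card_Un_disjoint[OF finite_subset[OF AU finU] finite_subset[OF BU finU] AB] by simp
  also have "\<dots> \<le> card U" using AU BU by (intro card_mono finU) auto
  finally show "dg w \<le> card U" using dgAB by simp
qed

lemma sum_swap:
  fixes h :: "'a \<Rightarrow> real"
  shows "(\<Sum>Y\<in>Pow U. \<Sum>w\<in>Fr Y. h w) = (\<Sum>w\<in>X0. h w * 2 ^ (card U - dg w))"
proof -
  have "(\<Sum>Y\<in>Pow U. \<Sum>w\<in>Fr Y. h w) = (\<Sum>Y\<in>Pow U. \<Sum>w\<in>X0. if w \<in> Fr Y then h w else 0)"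
  proof (rule sum.cong[OF refl])
    fix Y
    have "Fr Y = {w\<in>X0. w \<in> Fr Y}" using Fr_sub by auto
    then show "(\<Sum>w\<in>Fr Y. h w) = (\<Sum>w\<in>X0. if w \<in> Fr Y then h w else 0)"
      using sum.inter_filter[OF finX0, of h "\<lambda>w. w \<in> Fr Y"] by simp
  qed
  also have "\<dots> = (\<Sum>w\<in>X0. \<Sum>Y\<in>Pow U. if w \<in> Fr Y then h w else 0)" by (rule sum.swap)
  also have "\<dots> = (\<Sum>w\<in>X0. h w * 2 ^ (card U - dg w))"
  proof (rule sum.cong[OF refl])
    fix w assume w: "w \<in> X0"
    have "(\<Sum>Y\<in>Pow U. if w \<in> Fr Y then h w else 0) = (\<Sum>Y\<in>{Y\<in>Pow U. w \<in> Fr Y}. h w)"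
      using sum.inter_filter[of "Pow U" "\<lambda>_. h w" "\<lambda>Y. w \<in> Fr Y"] finU by simp
    also have "\<dots> = real (card {Y\<in>Pow U. w \<in> Fr Y}) * h w" by simp
    also have "\<dots> = h w * 2 ^ (card U - dg w)" using count_free(1)[OF w] by simp
    finally show "(\<Sum>Y\<in>Pow U. if w \<in> Fr Y then h w else 0) = h w * 2 ^ (card U - dg w)" .
  qed
  finally show ?thesis .
qed

lemma main_avg:
  assumes aS: "\<And>S. S \<subseteq> V \<Longrightarrow> (\<forall>x\<in>S. \<forall>y\<in>S. \<not> E x y) \<Longrightarrow> real (card S) \<le> a"
  shows "real (card I) + real (card U) + (\<Sum>w\<in>X0. (1 / (real (\<Delta> - dg w) + 1)) / 2 ^ dg w) \<le> a"
proof -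
  define h where "h w = 1 / (real (\<Delta> - dg w) + 1)" for w
  define N :: real where "N = 2 ^ card U"
  have Npos: "N > 0" unfolding N_def by simp
  have "(\<Sum>Y\<in>Pow U. real (card I) + real (card U) + (\<Sum>w\<in>Fr Y. h w)) \<le> (\<Sum>Y\<in>Pow U. a)"
    by (rule sum_mono) (use alpha_step[OF aS] h_def in auto)
  also have "\<dots> = N * a" unfolding N_def using finU by (simp add: card_Pow)
  finally have le: "(\<Sum>Y\<in>Pow U. real (card I) + real (card U) + (\<Sum>w\<in>Fr Y. h w)) \<le> N * a" .
  have "(\<Sum>Y\<in>Pow U. real (card I) + real (card U) + (\<Sum>w\<in>Fr Y. h w))
      = N * (real (card I) + real (card U)) + (\<Sum>w\<in>X0. h w * 2 ^ (card U - dg w))"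
    using finU by (simp add: sum.distrib sum_swap N_def card_Pow)
  also have "(\<Sum>w\<in>X0. h w * 2 ^ (card U - dg w)) = N * (\<Sum>w\<in>X0. h w / 2 ^ dg w)"
  proof -
    have "(\<Sum>w\<in>X0. h w * 2 ^ (card U - dg w)) = (\<Sum>w\<in>X0. N * (h w / 2 ^ dg w))"
    proof (rule sum.cong[OF refl])
      fix w assume w: "w \<in> X0"
      have "(2::real) ^ (card U - dg w) = 2 ^ card U / 2 ^ dg w"
        using power_diff[of "2::real" "dg w" "card U"] count_free(2)[OF w] by simp
      then show "h w * 2 ^ (card U - dg w) = N * (h w / 2 ^ dg w)" unfolding N_def by simp
    qed
    then show ?thesis by (simp add: sum_distrib_left)
  qed
  finally have "N * (real (card I) + real (card U) + (\<Sum>w\<in>X0. h w / 2 ^ dg w)) \<le> N * a"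
    using le by (simp add: algebra_simps)
  then show ?thesis using Npos h_def by simp
qed

lemma pointwise:
  assumes w: "w \<in> V" and D1: "\<Delta> \<ge> 1"
  shows "real (dg w) / (2 ^ \<Delta> * real \<Delta>) \<le> (1 / (real (\<Delta> - dg w) + 1)) / 2 ^ dg w"
proof -
  have le: "dg w \<le> \<Delta>" using dg_le[OF w] .
  have "dg w * (\<Delta> - dg w + 1) * 2 ^ dg w \<le> 2 ^ \<Delta> * \<Delta>" using pow_ineq[OF le] .
  then have r: "real (dg w) * (real (\<Delta> - dg w) + 1) * 2 ^ dg w \<le> 2 ^ \<Delta> * real \<Delta>"
    by (metis (mono_tags, lifting) of_nat_1 of_nat_add of_nat_le_iff of_nat_mult of_nat_numeral of_nat_power)
  have p1: "(real (\<Delta> - dg w) + 1) * 2 ^ dg w > 0" by (intro mult_pos_pos) auto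
  have p2: "2 ^ \<Delta> * real \<Delta> > 0" using D1 by simp
  have "(1 / (real (\<Delta> - dg w) + 1)) / 2 ^ dg w = 1 / ((real (\<Delta> - dg w) + 1) * 2 ^ dg w)" by simp
  moreover have "real (dg w) / (2 ^ \<Delta> * real \<Delta>) \<le> 1 / ((real (\<Delta> - dg w) + 1) * 2 ^ dg w)"
    using r p1 p2 by (simp add: divide_le_eq le_divide_eq mult.commute mult.left_commute)
  ultimately show ?thesis by simp
qed

lemma sum_dg: "2 * card U * (\<Delta> - 1) \<le> (\<Sum>w\<in>X0. dg w) + card I * \<Delta> * (\<Delta> - 1)"
proof -
  have finVD: "finite (V - D)" using finV by auto
  have "(\<Sum>w\<in>V - D. dg w) = (\<Sum>z\<in>M. card {w\<in>V - D. E w z})"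
    unfolding dg_def using double_count[OF finVD finM, of E] .
  also have "\<dots> = (\<Sum>z\<in>M. \<Delta> - 1)"
  proof (rule sum.cong[OF refl])
    fix z assume z: "z \<in> M"
    have pz: "p z \<in> D" "E z (p z)" using p_in[OF z] by auto
    have zV: "z \<in> V" using z MD DV by auto
    have "{w\<in>V - D. E w z} = {u\<in>V. E z u} - {p z}"
    proof (intro equalityI subsetI)
      fix w assume "w \<in> {w\<in>V - D. E w z}"
      then show "w \<in> {u\<in>V. E z u} - {p z}" using Esym pz by auto
    next
      fix u assume u: "u \<in> {u\<in>V. E z u} - {p z}"
      then have "u \<notin> D" using p_uniq[OF z] by auto
      then show "u \<in> {w\<in>V - D. E w z}" using u Esym by auto
    qed
    moreover have "p z \<in> {u\<in>V. E z u}" using pz DV by auto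
    ultimately show "card {w\<in>V - D. E w z} = \<Delta> - 1"
      using card_Diff_singleton nbr_card[OF zV] by simp
  qed
  also have "\<dots> = 2 * card U * (\<Delta> - 1)" using cardM by simp
  finally have tot: "(\<Sum>w\<in>V - D. dg w) = 2 * card U * (\<Delta> - 1)" .
  define R where "R = (V - D) - X0"
  have split: "(\<Sum>w\<in>V - D. dg w) = (\<Sum>w\<in>X0. dg w) + (\<Sum>w\<in>R. dg w)"
  proof -
    have "V - D = X0 \<union> R" "X0 \<inter> R = {}" using X0_sub R_def by auto
    moreover have "finite R" using R_def finVD by auto
    ultimately show ?thesis using finX0 by (simp add: sum.union_disjoint)
  qed
  have Rdg: "\<And>w. w \<in> R \<Longrightarrow> dg w \<le> \<Delta> - 1"
  proof -
    fix w assume w: "w \<in> R"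
    then obtain z where z: "E w z" "z \<in> I" unfolding R_def X0_def by auto
    have wV: "w \<in> V" using w R_def by auto
    have sub: "{z'\<in>M. E w z'} \<subseteq> {u\<in>V. E w u} - {z}" using MD DV IM z by auto
    have "dg w \<le> card ({u\<in>V. E w u} - {z})" unfolding dg_def by (intro card_mono) (use finV sub in auto)
    also have "\<dots> = \<Delta> - 1" using card_Diff_singleton[of z "{u\<in>V. E w u}"] z Ein nbr_card[OF wV] by auto
    finally show "dg w \<le> \<Delta> - 1" .
  qed
  have cR: "card R \<le> card I * \<Delta>"
  proof -
    have "R \<subseteq> (\<Union>z\<in>I. {u\<in>V. E z u})" unfolding R_def X0_def using Esym by auto
    moreover have "finite (\<Union>z\<in>I. {u\<in>V. E z u})" by (rule finite_subset[OF _ finV]) auto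
    ultimately have "card R \<le> card (\<Union>z\<in>I. {u\<in>V. E z u})"
      by (intro card_mono)
    also have "\<dots> \<le> (\<Sum>z\<in>I. card {u\<in>V. E z u})" using card_UN_le[OF finI] .
    also have "\<dots> = (\<Sum>z\<in>I. \<Delta>)" using nbr_card ID DV by (intro sum.cong refl) auto
    also have "\<dots> = card I * \<Delta>" by simp
    finally show ?thesis .
  qed
  have "(\<Sum>w\<in>R. dg w) \<le> (\<Sum>w\<in>R. \<Delta> - 1)" using Rdg by (rule sum_mono)
  also have "\<dots> = card R * (\<Delta> - 1)" by simp
  also have "\<dots> \<le> card I * \<Delta> * (\<Delta> - 1)" using cR by (rule mult_right_mono) simp
  finally show ?thesis using tot split by linarith
qed

lemma core:
  assumes D3: "\<Delta> \<ge> 3"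
    and aS: "\<And>S. S \<subseteq> V \<Longrightarrow> (\<forall>x\<in>S. \<forall>y\<in>S. \<not> E x y) \<Longrightarrow> real (card S) \<le> a"
  shows "a \<ge> 1/2 * (1 + (real \<Delta> - 1) * (real \<Delta> + 1) /
                (2 ^ \<Delta> * (real \<Delta>)^2 + (real \<Delta> - 1) * (real \<Delta> + 1))) * real (card D)"
proof -
  define x where "x = real (card I)"
  define m where "m = real (card U)"
  define d where "d = real \<Delta>"
  define P :: real where "P = 2 ^ \<Delta>"
  have d3: "d \<ge> 3" using D3 d_def by simp
  have P4: "P \<ge> 4 * (d - 1)"
  proof -
    have "real (4 * (\<Delta> - 1)) \<le> real ((2::nat) ^ \<Delta>)" using pow_ge[OF D3] by (simp only: of_nat_le_iff)
    then show ?thesis unfolding P_def d_def using D3 by (simp add: of_nat_diff)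
  qed
  have "(\<Sum>w\<in>X0. real (dg w) / (2 ^ \<Delta> * real \<Delta>)) \<le> (\<Sum>w\<in>X0. (1 / (real (\<Delta> - dg w) + 1)) / 2 ^ dg w)"
    by (rule sum_mono, rule pointwise) (use X0_sub D3 in auto)
  moreover have "(\<Sum>w\<in>X0. real (dg w) / (2 ^ \<Delta> * real \<Delta>)) = real (\<Sum>w\<in>X0. dg w) / (P * d)"
    unfolding P_def d_def by (simp add: sum_divide_distrib)
  moreover have "real (\<Sum>w\<in>X0. dg w) \<ge> 2 * m * (d - 1) - x * d * (d - 1)"
  proof -
    have "real (2 * card U * (\<Delta> - 1)) \<le> real ((\<Sum>w\<in>X0. dg w) + card I * \<Delta> * (\<Delta> - 1))"
      using sum_dg by (simp only: of_nat_le_iff)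
    then show ?thesis unfolding m_def x_def d_def using D3 by (simp add: of_nat_diff)
  qed
  ultimately have "a \<ge> x + m + (2 * m * (d - 1) - x * d * (d - 1)) / (P * d)"
    using main_avg[OF aS] unfolding x_def m_def
    by (smt (verit) P_def d3 d_def divide_right_mono mult_pos_pos zero_less_power)
  from final_arith[OF d3 _ _ P4 this] have
    "a \<ge> 1/2 * (1 + (d - 1) * (d + 1) / (P * d^2 + (d - 1) * (d + 1))) * (x + 2 * m)"
    unfolding x_def m_def by simp
  moreover have "x + 2 * m = real (card D)" using cardD unfolding x_def m_def by simp
  ultimately show ?thesis unfolding P_def d_def by simp
qed

end

theorem theorem2:
  fixes V :: "'a set" and E :: "'a \<Rightarrow> 'a \<Rightarrow> bool" and \<Delta> :: nat
  assumes "simple_graph V E"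
    and "\<Delta> \<ge> 3"
    and "triangle_free V E"
    and "regular V E \<Delta>"
  shows "real (alpha V E) \<ge>
    1/2 * (1 + (real \<Delta> - 1) * (real \<Delta> + 1) /
                (2 ^ \<Delta> * (real \<Delta>)^2 + (real \<Delta> - 1) * (real \<Delta> + 1)))
        * real (diss V E)"
proof -
  note sg = assms(1) and D3 = assms(2) and tf = assms(3) and reg = assms(4)
  have finV: "finite V" using sg unfolding simple_graph_def by auto
  have Esym: "\<And>x y. E x y \<Longrightarrow> E y x" using sg unfolding simple_graph_def by auto
  have Eirr: "\<And>x. \<not> E x x" using sg unfolding simple_graph_def by auto
  define DS where "DS = {D. dissociation_set V E D}"
  have finDS: "finite DS"
    by (rule finite_subset[of _ "Pow V"]) (use finV in \<open>auto simp: DS_def dissociation_set_def\<close>)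
  have "{} \<in> DS" unfolding DS_def dissociation_set_def neighbours_def by auto
  then have "diss V E \<in> card ` DS" unfolding diss_def DS_def[symmetric] using finDS
    by (intro Max_in) auto
  then obtain D where ds: "dissociation_set V E D" and cD: "card D = diss V E"
    unfolding DS_def by auto
  have DV: "D \<subseteq> V" using ds unfolding dissociation_set_def by auto
  have finD: "finite D" using finite_subset[OF DV finV] .
  have aS: "\<And>S. S \<subseteq> V \<Longrightarrow> (\<forall>x\<in>S. \<forall>y\<in>S. \<not> E x y) \<Longrightarrow> real (card S) \<le> real (alpha V E)"
  proof -
    fix S assume "S \<subseteq> V" "\<forall>x\<in>S. \<forall>y\<in>S. \<not> E x y"
    then have "S \<in> {S. independent_set V E S}" unfolding independent_set_def by auto
    moreover have "finite {S. independent_set V E S}"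
      by (rule finite_subset[of _ "Pow V"]) (use finV in \<open>auto simp: independent_set_def\<close>)
    ultimately have "card S \<le> alpha V E" unfolding alpha_def by (intro Max_ge) auto
    then show "real (card S) \<le> real (alpha V E)" by simp
  qed
  define I where "I = {v\<in>D. \<forall>u\<in>D. \<not> E v u}"
  define M where "M = D - I"
  define p where "p v = (THE u. u \<in> D \<and> E v u)" for v
  have uniq: "\<And>v u u'. v \<in> D \<Longrightarrow> u \<in> D \<Longrightarrow> u' \<in> D \<Longrightarrow> E v u \<Longrightarrow> E v u' \<Longrightarrow> u = u'"
  proof -
    fix v u u' assume v: "v \<in> D" and u: "u \<in> D" "u' \<in> D" "E v u" "E v u'"
    have "card (neighbours D E v) \<le> Suc 0" using ds v unfolding dissociation_set_def by auto
    moreover have "finite (neighbours D E v)" using finD unfolding neighbours_def by auto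
    ultimately have "\<forall>a\<in>neighbours D E v. \<forall>b\<in>neighbours D E v. a = b"
      using card_le_Suc0_iff_eq by blast
    then show "u = u'" using u unfolding neighbours_def by auto
  qed
  have p_in: "\<And>v. v \<in> M \<Longrightarrow> p v \<in> D \<and> E v (p v)"
  proof -
    fix v assume v: "v \<in> M"
    then obtain u where u: "u \<in> D" "E v u" and vD: "v \<in> D" unfolding M_def I_def by auto
    have "\<exists>!u. u \<in> D \<and> E v u" using u uniq[OF vD] by blast
    then show "p v \<in> D \<and> E v (p v)" unfolding p_def by (rule theI')
  qed
  have p_uniq: "\<And>v u. v \<in> M \<Longrightarrow> u \<in> D \<Longrightarrow> E v u \<Longrightarrow> u = p v"
    using p_in uniq unfolding M_def by blast
  have pM: "\<And>v. v \<in> M \<Longrightarrow> p v \<in> M"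
  proof -
    fix v assume v: "v \<in> M"
    have pv: "p v \<in> D" "E v (p v)" using p_in[OF v] by auto
    moreover have "v \<in> D" using v M_def by auto
    ultimately have "p v \<notin> I" using I_def Esym by auto
    then show "p v \<in> M" using pv M_def by auto
  qed
  have pp: "\<And>v. v \<in> M \<Longrightarrow> p (p v) = v"
  proof -
    fix v assume v: "v \<in> M"
    have "E (p v) v" using p_in[OF v] Esym by auto
    moreover have "v \<in> D" using v M_def by auto
    ultimately show "p (p v) = v" using p_uniq[OF pM[OF v]] by auto
  qed
  obtain f :: "'a \<Rightarrow> nat" where f: "bij_betw f V {0..<card V}"
    using ex_bij_betw_finite_nat[OF finV] by blast
  have finj: "inj_on f V" using f bij_betw_imp_inj_on by blast
  have MV: "M \<subseteq> V" using DV M_def by auto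
  define U where "U = {v\<in>M. f v < f (p v)}"
  have U_sub: "U \<subseteq> M" unfolding U_def by auto
  have U_disj: "U \<inter> p ` U = {}"
  proof (rule ccontr)
    assume "U \<inter> p ` U \<noteq> {}"
    then obtain u where u: "u \<in> U" "p u \<in> U" by auto
    then have "u \<in> M" using U_sub by auto
    then show False using u pp unfolding U_def by fastforce
  qed
  have U_cov: "M = U \<union> p ` U"
  proof (intro equalityI subsetI)
    fix v assume v: "v \<in> M"
    have "p v \<noteq> v" using p_in[OF v] Eirr by metis
    moreover have "p v \<in> V" "v \<in> V" using pM[OF v] v MV by auto
    ultimately have "f (p v) \<noteq> f v" using finj by (metis inj_onD)
    then consider "f v < f (p v)" | "f (p v) < f v" by linarith
    then show "v \<in> U \<union> p ` U"
    proof cases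
      case 1 then show ?thesis using v U_def by auto
    next
      case 2
      then have "p v \<in> U" using pM[OF v] pp[OF v] U_def by auto
      then show ?thesis using pp[OF v] by (metis UnI2 image_eqI)
    qed
  next
    fix v assume "v \<in> U \<union> p ` U"
    then show "v \<in> M" using U_sub pM by auto
  qed
  have "real (alpha V E) \<ge> 1/2 * (1 + (real \<Delta> - 1) * (real \<Delta> + 1) /
                (2 ^ \<Delta> * (real \<Delta>)^2 + (real \<Delta> - 1) * (real \<Delta> + 1))) * real (card D)"
    by (rule core[OF sg tf reg ds I_def M_def p_in p_uniq U_sub U_disj U_cov D3 aS])
  then show ?thesis using cD by simp
qed

end
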